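(* Let $q$ be a prime power and $N\ge n\ge1$. Then $\chi_1(N\times n,q)=q^N$.
   Context: $\mathbb{F}_q^{N\times n}$ is the set of $N\times n$ matrices over $\mathbb{F}_q$. An exactly $d$-distance coloring is a map $\Gamma:\mathbb{F}_q^{N\times n}\to\{1,\dots,L\}$ such that $\Gamma(M_1)\ne\Gamma(M_2)$ whenever $\mathrm{Rk}(M_1-M_2)=d$. $\chi_d(N\times n,q)$ denotes the minimum number $L$ of colors in an exactly $d$-distance coloring. *)

theory Defs
  imports "Jordan_Normal_Form.DL_Rank"
begin

definition exact_dist_coloring ::
  "nat \<Rightarrow> nat \<Rightarrow> nat \<Rightarrow> nat \<Rightarrow> ('a::field mat \<Rightarrow> nat) \<Rightarrow> bool" where
  "exact_dist_coloring N n d L \<Gamma> \<longleftrightarrow>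
     (\<forall>M \<in> carrier_mat N n. \<Gamma> M \<in> {1..L}) \<and>
     (\<forall>M1 \<in> carrier_mat N n. \<forall>M2 \<in> carrier_mat N n.
        vec_space.rank N (M1 - M2) = d \<longrightarrow> \<Gamma> M1 \<noteq> \<Gamma> M2)"

definition chi :: "nat \<Rightarrow> nat \<Rightarrow> nat \<Rightarrow> 'a::{finite,field} itself \<Rightarrow> nat" where
  "chi d N n (_ :: 'a itself) =
     (LEAST L. \<exists>\<Gamma> :: 'a mat \<Rightarrow> nat. exact_dist_coloring N n d L \<Gamma>)"

end

theory Submission
  imports Defs "HOL-Algebra.Algebraic_Closure_Type"
begin

lemma freshman_CHAR:
  fixes x y :: "'b::comm_ring_1"
  assumes p: "Factorial_Ring.prime CHAR('b)"
  shows "(x + y) ^ CHAR('b) = x ^ CHAR('b) + y ^ CHAR('b)"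
proof -
  define p where "p = CHAR('b)"
  have p2: "p \<ge> 2" using p Primes.prime_ge_2_nat p_def by blast
  have "(x + y) ^ p = (\<Sum>k\<le>p. of_nat (p choose k) * x ^ k * y ^ (p - k))"
    by (rule binomial_ring)
  also have "\<dots> = (\<Sum>k\<in>{0,p}. of_nat (p choose k) * x ^ k * y ^ (p - k))"
  proof (rule sum.mono_neutral_right)
    show "\<forall>k\<in>{..p} - {0, p}. of_nat (p choose k) * x ^ k * y ^ (p - k) = 0"
    proof
      fix k assume k: "k \<in> {..p} - {0, p}"
      have "p dvd (p choose k)" using k p p2 unfolding p_def by (intro dvd_choose_prime) auto
      hence "of_nat (p choose k) = (0::'b)" unfolding p_def using of_nat_eq_0_iff_char_dvd by blast
      thus "of_nat (p choose k) * x ^ k * y ^ (p - k) = 0" by simp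
    qed
  qed auto
  also have "\<dots> = x ^ p + y ^ p" using p2 by simp
  finally show ?thesis unfolding p_def .
qed

lemma freshman_CHAR_pow:
  fixes x y :: "'b::comm_ring_1"
  assumes p: "Factorial_Ring.prime CHAR('b)"
  shows "(x + y) ^ (CHAR('b) ^ k) = x ^ (CHAR('b) ^ k) + y ^ (CHAR('b) ^ k)"
proof (induction k)
  case (Suc k)
  have "(x + y) ^ (CHAR('b) ^ Suc k) = ((x + y) ^ (CHAR('b) ^ k)) ^ CHAR('b)"
    by (simp add: power_mult[symmetric] mult.commute)
  also have "\<dots> = (x ^ (CHAR('b) ^ k)) ^ CHAR('b) + (y ^ (CHAR('b) ^ k)) ^ CHAR('b)"
    by (simp add: Suc freshman_CHAR[OF p])
  also have "\<dots> = x ^ (CHAR('b) ^ Suc k) + y ^ (CHAR('b) ^ Suc k)"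
    by (simp add: power_mult[symmetric] mult.commute)
  finally show ?case .
qed simp

lemma power_card_fix:
  fixes x :: "'b::idom"
  assumes fin: "finite S" and z: "0 \<in> S" and x: "x \<in> S" and cl: "\<And>y. y \<in> S \<Longrightarrow> x * y \<in> S"
  shows "x ^ card S = x"
proof (cases "x = 0")
  case True
  have "card S > 0" using fin z card_gt_0_iff by blast
  then show ?thesis using True by (simp add: zero_power)
next
  case False
  define S' where "S' = S - {0}"
  have fin': "finite S'" using fin S'_def by simp
  have cS: "card S = Suc (card S')" proof - have "card S > 0" using fin z card_gt_0_iff by blast thus ?thesis using fin z S'_def by (simp add: card_Diff_singleton) qed
  have img: "(\<lambda>y. x * y) ` S' = S'"
  proof -
    have sub: "(\<lambda>y. x * y) ` S' \<subseteq> S'" using cl False S'_def by auto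
    have "inj_on (\<lambda>y. x * y) S'" using False by (auto intro: inj_onI)
    hence "card ((\<lambda>y. x * y) ` S') = card S'" by (rule card_image)
    thus ?thesis using sub fin' by (simp add: card_subset_eq)
  qed
  have "(\<Prod>y\<in>S'. x * y) = (\<Prod>y\<in>S'. y)"
  proof -
    have "(\<Prod>y\<in>S'. x * y) = prod id ((\<lambda>y. x * y) ` S')"
      using False by (subst prod.reindex) (auto intro: inj_onI)
    thus ?thesis using img by simp
  qed
  hence "x ^ card S' * (\<Prod>y\<in>S'. y) = 1 * (\<Prod>y\<in>S'. y)"
    by (simp add: prod.distrib)
  moreover have "(\<Prod>y\<in>S'. y) \<noteq> 0" using fin' S'_def by (simp add: prod_zero_iff)
  ultimately have "x ^ card S' = 1" by (metis mult_right_cancel)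
  thus ?thesis using cS by simp
qed

definition addsub :: "'b::field set \<Rightarrow> bool" where
  "addsub S \<longleftrightarrow> 0 \<in> S \<and> (\<forall>x\<in>S. \<forall>y\<in>S. x + y \<in> S)"

lemma addsub_ofnat: "addsub S \<Longrightarrow> x \<in> S \<Longrightarrow> of_nat m * x \<in> S"
  by (induction m) (auto simp: addsub_def algebra_simps)

lemma ofnat_mod_CHAR: "(of_nat (m mod CHAR('b)) :: 'b::semiring_1) = of_nat m"
proof -
  have "m = m mod CHAR('b) + CHAR('b) * (m div CHAR('b))" by simp
  hence "(of_nat m :: 'b) = of_nat (m mod CHAR('b)) + of_nat CHAR('b) * of_nat (m div CHAR('b))"
    by (metis of_nat_add of_nat_mult)
  thus ?thesis by simp
qed

lemma addsub_neg:
  assumes "addsub S" "x \<in> S" "CHAR('b) > 0"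
  shows "- x \<in> (S :: 'b::field set)"
proof -
  have "of_nat (CHAR('b) - 1) * x + x = of_nat (Suc (CHAR('b) - 1)) * x" by (simp add: algebra_simps)
  also have "Suc (CHAR('b) - 1) = CHAR('b)" using assms by simp
  finally have "of_nat (CHAR('b) - 1) * x = - x" by (simp add: eq_neg_iff_add_eq_0)
  thus ?thesis using addsub_ofnat[OF assms(1,2)] by metis
qed

lemma inv_ofnat:
  assumes fin: "finite (UNIV :: 'b::field set)" and m: "\<not> CHAR('b) dvd m"
  shows "\<exists>c. of_nat c * (of_nat m :: 'b) = 1"
proof -
  define P where "P = range (of_nat :: nat \<Rightarrow> 'b)"
  have finP: "finite P" using finite_subset[OF subset_UNIV fin] .
  have x0: "(of_nat m :: 'b) \<noteq> 0" using m of_nat_eq_0_iff_char_dvd by blast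
  have "(of_nat m :: 'b) ^ card P = of_nat m"
    by (rule power_card_fix[OF finP]) (auto simp: P_def of_nat_mult[symmetric] simp del: of_nat_mult intro: range_eqI[of _ _ 0])
  moreover have "card P \<ge> 2"
  proof -
    have "{0, 1} \<subseteq> P" unfolding P_def by (auto intro: range_eqI[of _ _ 0] range_eqI[of _ _ 1])
    hence "card {0::'b, 1} \<le> card P" using finP card_mono by blast
    thus ?thesis by simp
  qed
  ultimately obtain k where k: "card P = Suc (Suc k)" "(of_nat m :: 'b) ^ card P = of_nat m"
    by (metis add_2_eq_Suc le_Suc_ex)
  hence "(of_nat m :: 'b) ^ k * of_nat m * of_nat m = 1 * of_nat m"
    by (simp only: power_Suc2 mult_1)
  hence "(of_nat m :: 'b) ^ k * of_nat m = 1" using x0 by (metis mult_right_cancel)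
  thus ?thesis by (metis of_nat_power)
qed

lemma addsub_grow:
  fixes S :: "'b::field set"
  assumes fin: "finite (UNIV :: 'b set)" and S: "addsub S" and x: "x \<notin> S"
  defines "S' \<equiv> (\<lambda>(s,i). s + of_nat i * x) ` (S \<times> {..<CHAR('b)})"
  shows "addsub S'" "card S' = CHAR('b) * card S" "S \<subset> S'"
proof -
  define p where "p = CHAR('b)"
  have pp: "p > 0" unfolding p_def using finite_imp_CHAR_pos[OF fin] by simp
  show "addsub S'"
    unfolding addsub_def
  proof safe
    show "0 \<in> S'" unfolding S'_def using S pp by (auto simp: addsub_def p_def intro!: image_eqI[of _ _ "(0,0)"])
    fix a b assume "a \<in> S'" "b \<in> S'"
    then obtain s i s' i' where a: "a = s + of_nat i * x" "s \<in> S" and b: "b = s' + of_nat i' * x" "s' \<in> S"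
      unfolding S'_def by auto
    have "a + b = (s + s') + of_nat ((i + i') mod p) * x"
      unfolding a b p_def ofnat_mod_CHAR by (simp add: algebra_simps)
    moreover have "s + s' \<in> S" using S a b by (auto simp: addsub_def)
    ultimately show "a + b \<in> S'" unfolding S'_def p_def using pp p_def
      by (auto intro!: image_eqI[of _ _ "(s + s', (i + i') mod p)"])
  qed
  have inj: "inj_on (\<lambda>(s,i). s + of_nat i * x) (S \<times> {..<p})"
  proof (rule inj_onI, clarify)
    fix s i s' i' assume s: "s \<in> S" "i < p" "s' \<in> S" "i' < p" and eq: "s + of_nat i * x = s' + of_nat i' * x"
    have key: False if lt: "j < j'" "j' < p" "t \<in> S" "t' \<in> S" "t + of_nat j * x = t' + of_nat j' * x" for j j' t t'
    proof -
      have "of_nat (j' - j) * x = t + (- t')" using lt by (simp add: of_nat_diff algebra_simps)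
      moreover have "t + (- t') \<in> S" using S lt addsub_neg[OF S, of t'] pp p_def by (auto simp: addsub_def)
      ultimately have in1: "of_nat (j' - j) * x \<in> S" by simp
      have "\<not> p dvd (j' - j)" using lt by (auto dest: dvd_imp_le)
      then obtain c where c: "of_nat c * (of_nat (j' - j) :: 'b) = 1" using inv_ofnat[OF fin] p_def by blast
      have "x = of_nat c * (of_nat (j' - j) * x)" by (metis c mult.assoc mult_1)
      moreover have "of_nat c * (of_nat (j' - j) * x) \<in> S" by (rule addsub_ofnat[OF S in1])
      ultimately show False using x by metis
    qed
    have "i = i'"
    proof (rule ccontr)
      assume "i \<noteq> i'"
      then consider "i < i'" | "i' < i" by linarith
      thus False
      proof cases
        case 1 show False by (rule key[OF 1 s(4) s(1) s(3) eq])
      next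
        case 2 show False by (rule key[OF 2 s(2) s(3) s(1) eq[symmetric]])
      qed
    qed
    with eq show "s = s' \<and> i = i'" by simp
  qed
  show "card S' = CHAR('b) * card S"
  proof -
    have "card S' = card (S \<times> {..<p})" unfolding S'_def p_def[symmetric] by (rule card_image[OF inj])
    thus ?thesis by (simp add: card_cartesian_product p_def)
  qed
  show "S \<subset> S'"
  proof -
    have c0: "CHAR('b) \<noteq> Suc 0" by (rule CHAR_not_1)
    have c1: "1 < CHAR('b)" using c0 pp p_def by linarith
    have "S \<subseteq> S'"
    proof
      fix s assume "s \<in> S" thus "s \<in> S'" unfolding S'_def using pp p_def by (auto intro!: image_eqI[of _ _ "(s,0)"])
    qed
    moreover have "x \<in> S'" unfolding S'_def using c1 using S pp p_def
      by (auto simp: addsub_def intro!: image_eqI[of _ _ "(0,1)"])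
    ultimately show ?thesis using x by blast
  qed
qed

lemma card_finite_field_CHAR_power:
  assumes fin: "finite (UNIV :: 'b::field set)"
  shows "\<exists>k. card (UNIV :: 'b set) = CHAR('b) ^ k"
proof -
  have main: "\<And>S::'b set. card (UNIV::'b set) - card S = m \<Longrightarrow> addsub S \<Longrightarrow> \<exists>j. card S = CHAR('b) ^ j
         \<Longrightarrow> \<exists>k. card (UNIV :: 'b set) = CHAR('b) ^ k" for m
  proof (induction m rule: less_induct)
    case (less m S)
    show ?case
    proof (cases "S = UNIV")
      case True then show ?thesis using less.prems(3) by simp
    next
      case False
      then obtain x where x: "x \<notin> S" by auto
      define S' where "S' = (\<lambda>(s,i). s + of_nat i * x) ` (S \<times> {..<CHAR('b)})"
      note g = addsub_grow[OF fin less.prems(2) x, folded S'_def]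
      have "card S < card S'" by (rule psubset_card_mono[OF finite_subset[OF subset_UNIV fin] g(3)])
      moreover have "card S' \<le> card (UNIV :: 'b set)" using fin by (simp add: card_mono)
      ultimately have "card (UNIV::'b set) - card S' < m" using less.prems(1) by linarith
      moreover obtain j where "card S = CHAR('b) ^ j" using less.prems by blast
      ultimately have "card S' = CHAR('b) ^ Suc j" "card (UNIV::'b set) - card S' < m"
        using g(2) by auto
      thus ?thesis using less.IH[of "card (UNIV::'b set) - card S'" S'] g(1) by blast
    qed
  qed
  have "addsub {0::'b}" by (simp add: addsub_def)
  moreover have "card {0::'b} = CHAR('b) ^ 0" by simp
  ultimately show ?thesis using main[of "{0}" "card (UNIV::'b set) - card {0::'b}"] by blast
qed

lemma card_set_mset_count_le1:
  "(\<And>x. count A x \<le> 1) \<Longrightarrow> card (set_mset A) = size A"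
proof (induction A)
  case empty then show ?case by simp
next
  case (add x A)
  have "count (add_mset x A) x \<le> 1" using add.prems by blast
  hence nx: "x \<notin># A" by (simp add: not_in_iff)
  have "\<And>y. count A y \<le> 1" using add.prems by (metis count_add_mset le_Suc_eq le_trans nat_le_linear not_less_eq_eq)
  hence "card (set_mset A) = size A" by (rule add.IH)
  thus ?case using nx by simp
qed

lemma field_card_props:
  shows "Factorial_Ring.prime CHAR('a::{finite,field})" "\<exists>k. card (UNIV::'a set) = CHAR('a) ^ k"
    "card (UNIV :: 'a set) \<ge> 2"
proof -
  have fin: "finite (UNIV::'a set)" by simp
  show p: "Factorial_Ring.prime CHAR('a)" using finite_imp_CHAR_pos[OF fin] prime_CHAR_semidom by blast
  show "\<exists>k. card (UNIV::'a set) = CHAR('a) ^ k" by (rule card_finite_field_CHAR_power[OF fin])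
  have "card {0::'a, 1} \<le> card (UNIV :: 'a set)" by (rule card_mono) auto
  thus "card (UNIV :: 'a set) \<ge> 2" by simp
qed

lemma frob_add:
  fixes x y :: "'a::{finite,field} alg_closure"
  shows "(x + y) ^ (card (UNIV::'a set) ^ m) = x ^ (card (UNIV::'a set) ^ m) + y ^ (card (UNIV::'a set) ^ m)"
proof -
  obtain k where k: "card (UNIV::'a set) = CHAR('a) ^ k" using field_card_props(2) by blast
  have p: "Factorial_Ring.prime CHAR('a alg_closure)" using field_card_props(1) by simp
  have "card (UNIV::'a set) ^ m = CHAR('a alg_closure) ^ (k * m)" by (simp add: k power_mult)
  thus ?thesis using freshman_CHAR_pow[OF p] by simp
qed

lemma base_fix: "(x :: 'a::{finite,field}) ^ (card (UNIV::'a set) ^ m) = x"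
proof (induction m)
  case (Suc m)
  have c: "x ^ card (UNIV::'a set) = x" by (rule power_card_fix) auto
  have "x ^ (card (UNIV::'a set) ^ Suc m) = (x ^ (card (UNIV::'a set) ^ m)) ^ card (UNIV::'a set)"
    by (simp add: power_mult[symmetric] mult.commute)
  thus ?case using Suc c by simp
qed simp

lemma to_ac_fix: "(to_ac (x :: 'a::{finite,field})) ^ (card (UNIV::'a set) ^ m) = to_ac x"
  by (metis base_fix to_ac_power)

definition Kset :: "'a::{finite,field} itself \<Rightarrow> nat \<Rightarrow> 'a alg_closure set" where
  "Kset T m = {x. x ^ (card (UNIV::'a set) ^ m) = x}"

lemma Kset_add: "x \<in> Kset T m \<Longrightarrow> y \<in> Kset T m \<Longrightarrow> x + y \<in> Kset T m"
  by (simp add: Kset_def frob_add)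

lemma Kset_mult: "x \<in> Kset T m \<Longrightarrow> y \<in> Kset T m \<Longrightarrow> x * y \<in> Kset T m"
  by (simp add: Kset_def power_mult_distrib)

lemma Kset_to_ac: "to_ac x \<in> Kset TYPE('a::{finite,field}) m"
  by (simp add: Kset_def to_ac_fix)

lemma Kset_0: "0 \<in> Kset TYPE('a::{finite,field}) m"
  using Kset_to_ac[of "0::'a"] by simp

lemma Kset_pow: "x \<in> Kset T m \<Longrightarrow> x ^ k \<in> Kset T m"
proof -
  assume "x \<in> Kset T m"
  hence x: "x ^ (card (UNIV::'a set) ^ m) = x" by (simp add: Kset_def)
  have "(x ^ k) ^ (card (UNIV::'a set) ^ m) = (x ^ (card (UNIV::'a set) ^ m)) ^ k"
    by (simp add: power_mult[symmetric] mult.commute)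
  thus ?thesis using x by (simp add: Kset_def)
qed

lemma Kset_sum: "finite A \<Longrightarrow> (\<And>i. i \<in> A \<Longrightarrow> f i \<in> Kset TYPE('a::{finite,field}) m) \<Longrightarrow> sum f A \<in> Kset TYPE('a) m"
  by (induction A rule: finite_induct) (auto intro: Kset_add Kset_0)

lemma card_Kset:
  assumes m: "m \<ge> 1"
  shows "finite (Kset TYPE('a::{finite,field}) m)" "card (Kset TYPE('a) m) = card (UNIV::'a set) ^ m"
proof -
  define Q where "Q = card (UNIV::'a set)"
  define D where "D = Q ^ m"
  have Q2: "Q \<ge> 2" using field_card_props(3) Q_def by simp
  have D2: "D \<ge> 2"
  proof -
    have "Q ^ 1 \<le> Q ^ m" using m Q2 by (intro power_increasing) auto
    thus ?thesis using Q2 D_def by simp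
  qed
  define P :: "'a alg_closure poly" where "P = Polynomial.monom 1 D - Polynomial.monom 1 1"
  have polyP: "poly P x = x ^ D - x" for x by (simp add: P_def poly_monom)
  have K: "Kset TYPE('a) m = {x. poly P x = 0}" by (simp add: Kset_def polyP Q_def D_def)
  have cD: "Polynomial.coeff P D = 1" using D2 by (simp add: P_def coeff_monom)
  hence P0: "P \<noteq> 0" by auto
  have degP: "Polynomial.degree P = D"
  proof (rule antisym)
    show "Polynomial.degree P \<le> D" unfolding P_def using D2 by (intro degree_diff_le) (auto simp: Polynomial.degree_monom_eq)
    show "D \<le> Polynomial.degree P" using cD by (intro le_degree) simp
  qed
  have lcP: "Polynomial.lead_coeff P = 1" using degP cD by simp
  show finK: "finite (Kset TYPE('a) m)" unfolding K using P0 by (rule poly_roots_finite)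
  obtain A where A: "size A = Polynomial.degree P" "P = smult (Polynomial.lead_coeff P) (\<Prod>x\<in>#A. [:-x, 1:])"
    using alg_closed_imp_factorization[OF P0] by blast
  have PA: "P = (\<Prod>x\<in>#A. [:-x, 1:])" using A(2) lcP by simp
  have roots: "{x. poly P x = 0} = set_mset A"
  proof -
    have "poly P x = 0 \<longleftrightarrow> x \<in># A" for x
      by (subst PA, simp add: poly_prod_mset, auto simp: image_iff)
    thus ?thesis by auto
  qed
  obtain k where k: "Q = CHAR('a) ^ k" using field_card_props(2) Q_def by blast
  have k1: "k \<ge> 1" using k Q2 by (cases k) auto
  have charD: "(of_nat D :: 'a alg_closure) = 0"
  proof -
    have "CHAR('a) dvd D" unfolding D_def k power_mult[symmetric]
      using k1 m by (simp add: dvd_power)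
    thus ?thesis by (simp add: of_nat_eq_0_iff_char_dvd)
  qed
  have pd: "poly (pderiv P) x = -1" for x
    by (simp add: P_def pderiv_diff pderiv_monom poly_monom charD)
  have cnt: "count A r \<le> 1" for r
  proof (rule ccontr)
    assume "\<not> count A r \<le> 1"
    hence c2: "count A r \<ge> 2" by simp
    define B where "B = A - {#r, r#}"
    have "A = add_mset r (add_mset r B)"
    proof -
      have "{#r, r#} \<subseteq># A" using c2 by (simp add: subseteq_mset_def)
      thus ?thesis unfolding B_def using subset_mset.diff_add by fastforce
    qed
    hence P2: "P = [:-r, 1:] * ([:-r, 1:] * (\<Prod>x\<in>#B. [:-x, 1:]))" using PA by (simp add: mult.assoc)
    have qr: "poly [:-r, 1:] r = 0" by simp
    have "poly (pderiv P) r = 0"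
      unfolding P2 pderiv_mult poly_add poly_mult qr by simp
    thus False using pd[of r] by simp
  qed
  show "card (Kset TYPE('a) m) = card (UNIV::'a set) ^ m"
    unfolding K roots using card_set_mset_count_le1[of A, OF cnt] A(1) degP D_def Q_def by simp
qed

definition indep :: "nat \<Rightarrow> 'a::field alg_closure \<Rightarrow> bool" where
  "indep d \<alpha> \<longleftrightarrow> (\<forall>c::nat\<Rightarrow>'a. (\<Sum>i<d. to_ac (c i) * \<alpha> ^ i) = 0 \<longrightarrow> (\<forall>i<d. c i = 0))"

lemma not_indep_fix:
  fixes \<alpha> :: "'a::{finite,field} alg_closure"
  assumes ni: "\<not> indep N \<alpha>" and N: "N \<ge> 1"
  shows "\<exists>d. 1 \<le> d \<and> d < N \<and> \<alpha> ^ (card (UNIV::'a set) ^ d) = \<alpha>"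
proof -
  have ex0: "\<not> indep (Suc (N - 1)) \<alpha>" using ni N by simp
  hence ex: "\<exists>d. \<not> indep (Suc d) \<alpha>" by blast
  define d where "d = (LEAST d. \<not> indep (Suc d) \<alpha>)"
  have nd: "\<not> indep (Suc d) \<alpha>" unfolding d_def by (rule LeastI_ex[OF ex])
  have ind: "indep d \<alpha>"
  proof (cases d)
    case 0 then show ?thesis by (simp add: indep_def)
  next
    case (Suc d')
    have "d' < d" using Suc by simp
    hence "\<not> \<not> indep (Suc d') \<alpha>" unfolding d_def by (rule not_less_Least)
    thus ?thesis using Suc by simp
  qed
  have d1: "d \<ge> 1"
  proof (rule ccontr)
    assume "\<not> d \<ge> 1"
    hence "d = 0" by simp
    moreover have "indep 1 \<alpha>" by (simp add: indep_def)
    ultimately show False using nd by simp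
  qed
  have dN: "d < N"
  proof -
    have "\<not> indep (Suc (N - 1)) \<alpha>" using ni N by simp
    hence "d \<le> N - 1" unfolding d_def by (rule Least_le)
    thus ?thesis using N by simp
  qed
  obtain c :: "nat \<Rightarrow> 'a" and j where c: "(\<Sum>i<Suc d. to_ac (c i) * \<alpha> ^ i) = 0" "j < Suc d" "c j \<noteq> 0"
    using nd unfolding indep_def by blast
  have cd: "c d \<noteq> 0"
  proof
    assume cd0: "c d = 0"
    hence "(\<Sum>i<d. to_ac (c i) * \<alpha> ^ i) = 0" using c(1) by simp
    hence "\<forall>i<d. c i = 0" using ind unfolding indep_def by blast
    thus False using c(2,3) cd0 by (metis less_Suc_eq)
  qed
  define a where "a i = - c i / c d" for i
  have alpha_d: "\<alpha> ^ d = (\<Sum>i<d. to_ac (a i) * \<alpha> ^ i)"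
  proof -
    have e1: "to_ac (c d) * \<alpha> ^ d = - (\<Sum>i<d. to_ac (c i) * \<alpha> ^ i)"
      using c(1) by (simp add: eq_neg_iff_add_eq_0 add.commute)
    have "to_ac (c d) * (\<Sum>i<d. to_ac (a i) * \<alpha> ^ i) = (\<Sum>i<d. to_ac (c d * a i) * \<alpha> ^ i)"
      by (simp add: sum_distrib_left mult.assoc)
    also have "\<dots> = (\<Sum>i<d. - (to_ac (c i) * \<alpha> ^ i))"
      using cd by (intro sum.cong) (auto simp: a_def)
    also have "\<dots> = - (\<Sum>i<d. to_ac (c i) * \<alpha> ^ i)" by (simp add: sum_negf)
    finally show ?thesis using e1 cd by (metis mult_left_cancel to_ac_eq_0_iff)
  qed
  define S where "S = (\<lambda>b. \<Sum>i<d. to_ac (b i) * \<alpha> ^ i) ` (PiE {..<d} (\<lambda>_. UNIV))"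
  have memS: "(\<Sum>i<d. to_ac (b i) * \<alpha> ^ i) \<in> S" for b
  proof -
    have "(\<Sum>i<d. to_ac (b i) * \<alpha> ^ i) = (\<Sum>i<d. to_ac (restrict b {..<d} i) * \<alpha> ^ i)"
      by (intro sum.cong) auto
    thus ?thesis unfolding S_def by (intro image_eqI[of _ _ "restrict b {..<d}"]) auto
  qed
  have cardS: "card S = card (UNIV::'a set) ^ d"
  proof -
    have "inj_on (\<lambda>b. \<Sum>i<d. to_ac (b i) * \<alpha> ^ i) (PiE {..<d} (\<lambda>_. UNIV))"
    proof (rule inj_onI)
      fix b b' assume bb: "b \<in> PiE {..<d} (\<lambda>_. UNIV)" "b' \<in> PiE {..<d} (\<lambda>_. UNIV)"
        and eq: "(\<Sum>i<d. to_ac (b i) * \<alpha> ^ i) = (\<Sum>i<d. to_ac (b' i) * \<alpha> ^ i)"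
      have "(\<Sum>i<d. to_ac (b i - b' i) * \<alpha> ^ i) = (\<Sum>i<d. to_ac (b i) * \<alpha> ^ i) - (\<Sum>i<d. to_ac (b' i) * \<alpha> ^ i)"
        by (simp add: sum_subtractf algebra_simps)
      also have "\<dots> = 0" using eq by simp
      finally have z: "(\<Sum>i<d. to_ac (b i - b' i) * \<alpha> ^ i) = 0" .
      have "\<forall>i<d. b i - b' i = 0" by (rule mp[OF ind[unfolded indep_def, THEN spec[of _ "\<lambda>i. b i - b' i"]] z])
      thus "b = b'" using bb by (intro PiE_ext[OF bb]) auto
    qed
    hence "card S = card (PiE {..<d} (\<lambda>_. UNIV::'a set))" unfolding S_def by (rule card_image)
    also have "\<dots> = card (UNIV::'a set) ^ d" by (simp add: card_PiE)
    finally show ?thesis .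
  qed
  have finS: "finite S" unfolding S_def by (intro finite_imageI finite_PiE) auto
  have S0: "0 \<in> S" using memS[of "\<lambda>_. 0"] by simp
  have S1: "1 \<in> S"
  proof -
    have "(\<Sum>i<d. to_ac ((\<lambda>i. if i = 0 then 1 else 0) i) * \<alpha> ^ i) = (\<Sum>i<d. if i = 0 then 1 else 0)"
      by (intro sum.cong) auto
    also have "\<dots> = 1" using d1 by simp
    finally show ?thesis using memS by metis
  qed
  have clos: "\<alpha> * y \<in> S" if y: "y \<in> S" for y
  proof -
    obtain b where yb: "y = (\<Sum>i<d. to_ac (b i) * \<alpha> ^ i)" using y unfolding S_def by blast
    obtain d' where d': "d = Suc d'" using d1 by (cases d) auto
    define b' where "b' i = (if i = 0 then 0 else b (i - 1)) + b d' * a i" for i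
    have "(\<Sum>i<d. to_ac (b' i) * \<alpha> ^ i) =
          (\<Sum>i<d. to_ac (if i = 0 then 0 else b (i - 1)) * \<alpha> ^ i) + to_ac (b d') * (\<Sum>i<d. to_ac (a i) * \<alpha> ^ i)"
      by (simp add: b'_def sum.distrib sum_distrib_left distrib_right mult.assoc)
    also have "(\<Sum>i<d. to_ac (if i = 0 then 0 else b (i - 1)) * \<alpha> ^ i) = (\<Sum>i<d'. to_ac (b i) * \<alpha> ^ Suc i)"
      unfolding d' sum.lessThan_Suc_shift by simp
    also have "(\<Sum>i<d. to_ac (a i) * \<alpha> ^ i) = \<alpha> ^ Suc d'" using alpha_d d' by simp
    also have "(\<Sum>i<d'. to_ac (b i) * \<alpha> ^ Suc i) + to_ac (b d') * \<alpha> ^ Suc d' = (\<Sum>i<Suc d'. to_ac (b i) * \<alpha> ^ Suc i)"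
      by simp
    also have "\<dots> = \<alpha> * y" unfolding yb d' sum_distrib_left by (rule sum.cong) (simp_all add: mult_ac)
    finally show ?thesis using memS by metis
  qed
  have "\<alpha> \<in> S" using clos[OF S1] by simp
  hence "\<alpha> ^ card S = \<alpha>" using power_card_fix[OF finS S0 _ clos] by blast
  thus ?thesis using cardS d1 dN by metis
qed

lemma geom_less: "(q::nat) \<ge> 2 \<Longrightarrow> (\<Sum>d<N. q ^ d) < q ^ N"
proof (induction N)
  case 0 then show ?case by simp
next
  case (Suc N)
  have "(\<Sum>d<Suc N. q ^ d) = (\<Sum>d<N. q ^ d) + q ^ N" by simp
  also have "\<dots> < q ^ N + q ^ N" using Suc by simp
  also have "\<dots> \<le> q ^ Suc N"
  proof -
    have "2 * q ^ N \<le> q * q ^ N" using Suc.prems by (rule mult_le_mono1)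
    thus ?thesis by (simp only: power_Suc mult_2)
  qed
  finally show ?case .
qed

lemma good_exists:
  assumes N: "N \<ge> 1"
  shows "\<exists>\<alpha> \<in> Kset TYPE('a::{finite,field}) N. indep N \<alpha>"
proof (rule ccontr)
  assume "\<not> ?thesis"
  hence bad: "\<And>\<alpha>. \<alpha> \<in> Kset TYPE('a) N \<Longrightarrow> \<not> indep N \<alpha>" by blast
  define Q where "Q = card (UNIV::'a set)"
  have Q2: "Q \<ge> 2" using field_card_props(3) Q_def by simp
  have sub: "Kset TYPE('a) N \<subseteq> (\<Union>d\<in>{1..<N}. Kset TYPE('a) d)"
  proof
    fix \<alpha> assume "\<alpha> \<in> Kset TYPE('a) N"
    then obtain d where "1 \<le> d" "d < N" "\<alpha> ^ (card (UNIV::'a set) ^ d) = \<alpha>"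
      using not_indep_fix[OF bad N] by blast
    thus "\<alpha> \<in> (\<Union>d\<in>{1..<N}. Kset TYPE('a) d)" by (auto simp: Kset_def)
  qed
  have fin: "finite (\<Union>d\<in>{1..<N}. Kset TYPE('a) d)" using card_Kset(1)[where 'a='a] by auto
  have "Q ^ N = card (Kset TYPE('a) N)" using card_Kset(2)[OF N, where 'a='a] Q_def by simp
  also have "\<dots> \<le> card (\<Union>d\<in>{1..<N}. Kset TYPE('a) d)" by (rule card_mono[OF fin sub])
  also have "\<dots> \<le> (\<Sum>d\<in>{1..<N}. card (Kset TYPE('a) d))" by (rule card_UN_le) simp
  also have "\<dots> = (\<Sum>d\<in>{1..<N}. Q ^ d)" using card_Kset(2)[where 'a='a] Q_def by (intro sum.cong) auto
  also have "\<dots> \<le> (\<Sum>d<N. Q ^ d)" by (intro sum_mono2) auto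
  also have "\<dots> < Q ^ N" by (rule geom_less[OF Q2])
  finally show False by simp
qed

lemma rank_col0:
  fixes u :: "'a::field vec"
  assumes u: "u \<in> carrier_vec N" "u \<noteq> 0\<^sub>v N" and n: "n \<ge> 1"
  shows "vec_space.rank N (mat N n (\<lambda>(i,j). if j = 0 then u $ i else 0)) = 1"
proof -
  interpret vec_space "TYPE('a)" N .
  define E where "E = mat N n (\<lambda>(i,j). if j = 0 then u $ i else 0)"
  have E: "E \<in> carrier_mat N n" unfolding E_def by simp
  have le: "rank E \<le> 1"
    by (rule rank_le_1_product_entries[OF E, of "\<lambda>i. u $ i" "\<lambda>j. if j = 0 then 1 else 0"])
       (auto simp: E_def)
  have colu: "col E 0 = u" using u n unfolding E_def by (intro eq_vecI) auto
  have inU: "{u} \<subseteq> set (cols E)" using colu n E by (auto simp: cols_def)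
  have li: "lin_indpt {u}"
  proof
    assume "lin_dep {u}"
    then obtain f v where f: "f \<in> {u} \<rightarrow> carrier class_ring" "lincomb f {u} = 0\<^sub>v N" "v \<in> {u}" "f v \<noteq> 0"
      using finite_lin_dep[of "{u}"] u by auto
    have "u = 0\<^sub>v N"
    proof (rule eq_vecI)
      fix i assume i: "i < dim_vec (0\<^sub>v N :: 'a vec)"
      hence "lincomb f {u} $ i = f u * u $ i" using u by (subst lincomb_index) auto
      hence "f u * u $ i = 0" using f(2) i by simp
      thus "u $ i = 0\<^sub>v N $ i" using f(3,4) i by simp
    qed (use u in auto)
    thus False using u by simp
  qed
  have "rank E \<ge> card {u}" by (rule rank_ge_card_indpt[OF E inU li])
  thus ?thesis using le E_def by simp
qed

lemma rank1_struct:
  fixes D :: "'a::field mat"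
  assumes D: "D \<in> carrier_mat N n" and r: "vec_space.rank N D = 1"
  shows "\<exists>a b. (\<exists>i<N. a i \<noteq> 0) \<and> (\<exists>j<n. b j \<noteq> 0) \<and> (\<forall>i<N. \<forall>j<n. D $$ (i,j) = a i * b j)"
proof -
  interpret vec_space "TYPE('a)" N .
  have D0: "D \<noteq> 0\<^sub>m N n" using r rank_0I by auto
  have "\<exists>i<N. \<exists>j<n. D $$ (i,j) \<noteq> 0"
  proof (rule ccontr)
    assume "\<not> ?thesis"
    hence "D = 0\<^sub>m N n" using D by (intro eq_matI) auto
    thus False using D0 by simp
  qed
  then obtain i0 j0 where ij0: "i0 < N" "j0 < n" "D $$ (i0, j0) \<noteq> 0" by blast
  define u where "u = col D j0"
  have u: "u \<in> carrier_vec N" "u $ i0 \<noteq> 0" using D ij0 by (auto simp: u_def)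
  have ex: "\<exists>k. \<forall>i<N. D $$ (i, j) = D $$ (i, j0) * k" if j: "j < n" for j
  proof -
    define c where "c = col D j"
    have c: "c \<in> carrier_vec N" using D j unfolding c_def by simp
    have cent: "\<And>i. i < N \<Longrightarrow> D $$ (i, j) = c $ i" using D j by (simp add: c_def)
    have uent: "\<And>i. i < N \<Longrightarrow> D $$ (i, j0) = u $ i" using D ij0 by (simp add: u_def)
    show ?thesis
    proof (cases "c = u")
      case True
      thus ?thesis using cent uent by (intro exI[of _ 1]) auto
    next
      case False
      have sub: "{u, c} \<subseteq> set (cols D)" using D j ij0 by (auto simp: cols_def u_def c_def)
      have "lin_dep {u, c}"
      proof (rule ccontr)
        assume li: "\<not> lin_dep {u, c}"
        have "rank D \<ge> card {u, c}" by (rule rank_ge_card_indpt[OF D sub li])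
        thus False using r False by simp
      qed
      then obtain f v where f: "f \<in> {u, c} \<rightarrow> carrier class_ring" "lincomb f {u, c} = 0\<^sub>v N" "v \<in> {u, c}" "f v \<noteq> 0"
        using finite_lin_dep[of "{u, c}"] u c by auto
      have lc: "f u * u $ i + f c * c $ i = 0" if i: "i < N" for i
      proof -
        have "lincomb f {u, c} $ i = f u * u $ i + f c * c $ i" using u c False i by (subst lincomb_index) auto
        thus ?thesis using f(2) i by simp
      qed
      have fc: "f c \<noteq> 0"
      proof
        assume fc0: "f c = 0"
        hence "f u \<noteq> 0" using f(3,4) by auto
        moreover have "f u * u $ i0 = 0" using lc[OF ij0(1)] fc0 by simp
        ultimately show False using u(2) by simp
      qed
      show ?thesis
      proof (intro exI[of _ "- f u / f c"] allI impI)
        fix i assume i: "i < N"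
        have "c $ i = - f u / f c * u $ i" using lc[OF i] fc by (simp add: field_simps eq_neg_iff_add_eq_0)
        thus "D $$ (i, j) = D $$ (i, j0) * (- f u / f c)" using cent[OF i] uent[OF i] by (simp add: mult.commute)
      qed
    qed
  qed
  hence "\<forall>j\<in>{..<n}. \<exists>k. \<forall>i<N. D $$ (i, j) = D $$ (i, j0) * k" by blast
  then obtain b where b: "\<forall>j\<in>{..<n}. \<forall>i<N. D $$ (i, j) = D $$ (i, j0) * b j" by (metis bchoice)
  have "D $$ (i0, j0) = D $$ (i0, j0) * b j0" using b ij0 by blast
  hence "b j0 = 1" using ij0(3) by (metis mult_cancel_left1)
  show ?thesis
  proof (rule exI[of _ "\<lambda>i. D $$ (i, j0)"], rule exI[of _ b], intro conjI)
    show "\<exists>i<N. D $$ (i, j0) \<noteq> 0" using ij0 by blast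
    show "\<exists>j<n. b j \<noteq> 0" using ij0(2) \<open>b j0 = 1\<close> by (intro exI[of _ j0]) simp
    show "\<forall>i<N. \<forall>j<n. D $$ (i, j) = D $$ (i, j0) * b j" using b by simp
  qed
qed

lemma card_carrier_vec_field: "card (carrier_vec N :: 'a::finite vec set) = card (UNIV::'a set) ^ N"
proof -
  have inj: "inj_on (\<lambda>f. vec N f) (PiE {..<N} (\<lambda>_. UNIV::'a set))"
  proof (rule inj_onI)
    fix f g assume fg: "f \<in> PiE {..<N} (\<lambda>_. UNIV::'a set)" "g \<in> PiE {..<N} (\<lambda>_. UNIV::'a set)"
      and eq: "vec N f = vec N g"
    have "\<And>i. i \<in> {..<N} \<Longrightarrow> f i = g i"
    proof -
      fix i assume "i \<in> {..<N}"
      hence "vec N f $ i = f i" "vec N g $ i = g i" by auto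
      thus "f i = g i" using eq by metis
    qed
    thus "f = g" by (rule PiE_ext[OF fg])
  qed
  have img: "(\<lambda>f. vec N f) ` (PiE {..<N} (\<lambda>_. UNIV::'a set)) = carrier_vec N"
  proof
    show "(\<lambda>f. vec N f) ` (PiE {..<N} (\<lambda>_. UNIV::'a set)) \<subseteq> carrier_vec N" by (intro image_subsetI) simp
    show "carrier_vec N \<subseteq> (\<lambda>f. vec N f) ` (PiE {..<N} (\<lambda>_. UNIV::'a set))"
    proof
      fix v :: "'a vec" assume v: "v \<in> carrier_vec N"
      have "v = vec N (restrict (\<lambda>i. v $ i) {..<N})" using v by (intro eq_vecI) simp_all
      moreover have "restrict (\<lambda>i. v $ i) {..<N} \<in> PiE {..<N} (\<lambda>_. UNIV::'a set)" by simp
      ultimately show "v \<in> (\<lambda>f. vec N f) ` (PiE {..<N} (\<lambda>_. UNIV::'a set))" by (rule image_eqI)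
    qed
  qed
  have "card (carrier_vec N :: 'a vec set) = card (PiE {..<N} (\<lambda>_. UNIV::'a set))"
    unfolding img[symmetric] by (rule card_image[OF inj])
  thus ?thesis by (simp add: card_PiE)
qed

lemma lower_bound:
  fixes \<Gamma> :: "'a::{finite,field} mat \<Rightarrow> nat"
  assumes col: "exact_dist_coloring N n 1 L \<Gamma>" and n: "n \<ge> 1"
  shows "card (UNIV::'a set) ^ N \<le> L"
proof -
  define E where "E v = mat N n (\<lambda>(i,j). if j = 0 then v $ i else (0::'a))" for v :: "'a vec"
  have Ec: "E v \<in> carrier_mat N n" for v by (simp add: E_def)
  have inj: "inj_on (\<lambda>v. \<Gamma> (E v)) (carrier_vec N)"
  proof (rule inj_onI, rule ccontr)
    fix v w :: "'a vec" assume v: "v \<in> carrier_vec N" and w: "w \<in> carrier_vec N"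
      and eq: "\<Gamma> (E v) = \<Gamma> (E w)" and ne: "v \<noteq> w"
    have dif: "E v - E w = E (v - w)" using v w by (intro eq_matI) (auto simp: E_def)
    have vw: "v - w \<in> carrier_vec N" "v - w \<noteq> 0\<^sub>v N"
    proof -
      show "v - w \<in> carrier_vec N" using v w by simp
      show "v - w \<noteq> 0\<^sub>v N"
      proof
        assume z: "v - w = 0\<^sub>v N"
        have "v = w"
        proof (rule eq_vecI)
          fix i assume i: "i < dim_vec w"
          have "(v - w) $ i = 0" using z i w by simp
          thus "v $ i = w $ i" using i v w by simp
        qed (use v w in simp)
        thus False using ne by simp
      qed
    qed
    have "vec_space.rank N (E (v - w)) = 1" unfolding E_def by (rule rank_col0[OF vw n])
    hence "vec_space.rank N (E v - E w) = 1" by (simp only: dif)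
    thus False using col eq Ec[of v] Ec[of w] unfolding exact_dist_coloring_def by blast
  qed
  have sub: "(\<lambda>v. \<Gamma> (E v)) ` carrier_vec N \<subseteq> {1..L}" using col Ec unfolding exact_dist_coloring_def by blast
  have "card (UNIV::'a set) ^ N = card (carrier_vec N :: 'a vec set)" by (simp add: card_carrier_vec_field)
  also have "\<dots> = card ((\<lambda>v. \<Gamma> (E v)) ` carrier_vec N)" using card_image[OF inj] by simp
  also have "\<dots> \<le> card {1..L}" by (rule card_mono[OF _ sub]) simp
  finally show ?thesis by simp
qed

lemma upper_bound:
  assumes n1: "1 \<le> n" and nN: "n \<le> N"
  shows "\<exists>\<Gamma> :: 'a::{finite,field} mat \<Rightarrow> nat. exact_dist_coloring N n 1 (card (UNIV::'a set) ^ N) \<Gamma>"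
proof -
  have N1: "N \<ge> 1" using n1 nN by simp
  obtain \<alpha> where aK: "\<alpha> \<in> Kset TYPE('a) N" and ind: "indep N \<alpha>"
    using good_exists[OF N1, where 'a='a] by blast
  define K where "K = Kset TYPE('a) N"
  have finK: "finite K" unfolding K_def by (rule card_Kset(1)[OF N1])
  have cardK: "card K = card (UNIV::'a set) ^ N" unfolding K_def by (rule card_Kset(2)[OF N1])
  obtain h where h: "bij_betw h K {0..<card K}" using ex_bij_betw_finite_nat[OF finK] by blast
  define val where "val M = (\<Sum>i<N. \<Sum>j<n. to_ac (M $$ (i,j)) * (\<alpha> ^ i * \<alpha> ^ j))" for M :: "'a mat"
  have valK: "val M \<in> K" for M
    unfolding val_def K_def
    by (intro Kset_sum Kset_mult Kset_to_ac Kset_pow aK) auto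
  define \<Gamma> where "\<Gamma> M = Suc (h (val M))" for M
  have injh: "inj_on h K" using h by (rule bij_betw_imp_inj_on)
  show ?thesis
  proof (rule exI[of _ \<Gamma>], unfold exact_dist_coloring_def, intro conjI ballI impI)
    fix M :: "'a mat" assume "M \<in> carrier_mat N n"
    have "h (val M) \<in> {0..<card K}" using bij_betw_apply[OF h valK] .
    thus "\<Gamma> M \<in> {1..card (UNIV::'a set) ^ N}" using cardK by (simp add: \<Gamma>_def)
  next
    fix M1 M2 :: "'a mat" assume M1: "M1 \<in> carrier_mat N n" and M2: "M2 \<in> carrier_mat N n"
      and r: "vec_space.rank N (M1 - M2) = 1"
    show "\<Gamma> M1 \<noteq> \<Gamma> M2"
    proof
      assume "\<Gamma> M1 = \<Gamma> M2"
      hence "h (val M1) = h (val M2)" by (simp add: \<Gamma>_def)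
      hence eqv: "val M1 = val M2" using injh valK by (meson inj_onD)
      define D where "D = M1 - M2"
      have Dc: "D \<in> carrier_mat N n" unfolding D_def by (rule minus_carrier_mat[OF M2])
      have valD: "val D = val M1 - val M2"
      proof -
        have "val D = (\<Sum>i<N. \<Sum>j<n. to_ac (M1 $$ (i,j) - M2 $$ (i,j)) * (\<alpha> ^ i * \<alpha> ^ j))"
          unfolding val_def D_def using M1 M2 by (intro sum.cong refl) auto
        also have "\<dots> = val M1 - val M2"
          by (simp add: val_def sum_subtractf left_diff_distrib)
        finally show ?thesis .
      qed
      obtain a b where ab: "\<exists>i<N. a i \<noteq> 0" "\<exists>j<n. b j \<noteq> 0" "\<forall>i<N. \<forall>j<n. D $$ (i,j) = a i * b j"
        using rank1_struct[OF Dc] r D_def by blast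
      define Xa where "Xa = (\<Sum>i<N. to_ac (a i) * \<alpha> ^ i)"
      define Ya where "Ya = (\<Sum>j<n. to_ac (b j) * \<alpha> ^ j)"
      have "val D = (\<Sum>i<N. \<Sum>j<n. (to_ac (a i) * \<alpha> ^ i) * (to_ac (b j) * \<alpha> ^ j))"
        unfolding val_def using ab(3) by (intro sum.cong refl) (simp add: mult_ac)
      also have "\<dots> = Xa * Ya" unfolding Xa_def Ya_def by (rule sum_product[symmetric])
      finally have vXY: "val D = Xa * Ya" .
      have Xa0: "Xa \<noteq> 0"
      proof
        assume "Xa = 0"
        hence "\<forall>i<N. a i = 0" using ind unfolding indep_def Xa_def by blast
        thus False using ab(1) by blast
      qed
      have Y0: "Ya \<noteq> 0"
      proof
        assume Ya: "Ya = 0"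
        define c where "c j = (if j < n then b j else 0)" for j
        have "(\<Sum>j<N. to_ac (c j) * \<alpha> ^ j) = (\<Sum>j<n. to_ac (c j) * \<alpha> ^ j)"
          by (rule sum.mono_neutral_right) (use nN in \<open>auto simp: c_def\<close>)
        also have "\<dots> = Ya" unfolding Ya_def c_def by (intro sum.cong) auto
        finally have "(\<Sum>j<N. to_ac (c j) * \<alpha> ^ j) = 0" using Ya by simp
        hence "\<forall>j<N. c j = 0" by (rule mp[OF ind[unfolded indep_def, THEN spec[of _ c]]])
        hence cz: "\<forall>j<N. c j = 0" .
        have "\<forall>j<n. b j = 0"
        proof (intro allI impI)
          fix j assume j: "j < n"
          hence "c j = 0" using cz nN by simp
          thus "b j = 0" using j by (simp add: c_def)
        qed
        thus False using ab(2) by blast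
      qed
      have "val D \<noteq> 0" using vXY Xa0 Y0 by simp
      thus False using valD eqv by simp
    qed
  qed
qed

theorem proposition4p1:
  fixes N n :: nat
  assumes "1 \<le> n" and "n \<le> N"
  shows "chi 1 N n TYPE('a::{finite,field}) = card (UNIV :: 'a set) ^ N"
  unfolding chi_def
proof (rule Least_equality)
  show "\<exists>\<Gamma> :: 'a mat \<Rightarrow> nat. exact_dist_coloring N n 1 (card (UNIV::'a set) ^ N) \<Gamma>"
    by (rule upper_bound[OF assms])
next
  fix L assume "\<exists>\<Gamma> :: 'a mat \<Rightarrow> nat. exact_dist_coloring N n 1 L \<Gamma>"
  then obtain \<Gamma> :: "'a mat \<Rightarrow> nat" where "exact_dist_coloring N n 1 L \<Gamma>" by blast
  thus "card (UNIV::'a set) ^ N \<le> L" by (rule lower_bound[OF _ assms(1)])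
qed

end
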